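(* Let $c>0$, $\omega,\omega^\perp\in S^1$ with $\omega\cdot\omega^\perp=0$, $\omega(c)=\frac{1}{\sqrt{c^2+1}}\binom{c\omega}{-1}\in\mathbb{R}^3$, and $\vartheta=\binom{c(\omega+i\omega^\perp)}{-1}\in\mathbb{C}^3$. Let $p\in\mathbb{R}^3$, $\delta>0$, and $y_1,y_2,y_3\in\mathbb{R}^3$ with $y_j\cdot\omega(c)=p\cdot\omega(c)-\delta$, affinely independent together with $p$. Let $D$ be the interior of the tetrahedron with vertices $p,y_1,y_2,y_3$ and $Q$ the interior of the triangle with vertices $y_1,y_2,y_3$. With $\Delta=\{(\alpha,\beta):\alpha,\beta\ge0,\alpha+\beta\le1\}$, let $\Delta_1,\Delta_2,\Delta_3$ be the images of $\Delta$ under $(\alpha,\beta)\mapsto p+\alpha(y_1-p)+\beta(y_2-p)$, $p+\alpha(y_2-p)+\beta(y_3-p)$, $p+\alpha(y_3-p)+\beta(y_1-p)$ respectively, so that $\partial D=Q\cup\Delta_1\cup\Delta_2\cup\Delta_3$, and let $\nu_j$ be the outward unit normal of $D$ on $\Delta_j$; indices are taken modulo $3$ ($\nu_0=\nu_3$, $\nu_4=\nu_1$). Assume the labeling is such that $$(\nu_1\times\nu_3)\cdot\omega(c)<0,\quad(\nu_2\times\nu_1)\cdot\omega(c)<0,\quad(\nu_3\times\nu_2)\cdot\omega(c)<0.$$ Let $$K_D=2\delta\int_Q\frac{dS(y)}{\Big(\frac{\delta\sqrt{c^2+1}}{c}-i(y-p)\cdot\binom{\omega^\perp}{0}\Big)^{3}}.$$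 Then $$K_D\,\vartheta=c^3\sum_{j=1}^3\frac{|(\nu_j\times\nu_{j-1})\times(\nu_{j+1}\times\nu_j)|}{\big((\nu_j\times\nu_{j-1})\cdot\vartheta\big)\big((\nu_{j+1}\times\nu_j)\cdot\vartheta\big)}\,\nu_j.$$
   Context: $\times$ is the cross product in $\mathbb{R}^3$ and $\cdot$ on complex vectors is the bilinear (non-Hermitian) product. *)

theory Defs
  imports "HOL-Analysis.Analysis"
begin

definition bdot :: "complex^3 \<Rightarrow> complex^3 \<Rightarrow> complex" where
  "bdot x z = (\<Sum>i\<in>UNIV. x$i * z$i)"

definition cvec :: "real^3 \<Rightarrow> complex^3" where
  "cvec v = (\<chi> i. complex_of_real (v$i))"

definition omega_c :: "real \<Rightarrow> real^2 \<Rightarrow> real^3" where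
  "omega_c c w = (1 / sqrt (c^2 + 1)) *\<^sub>R vector [c * w$1, c * w$2, -1]"

definition vartheta :: "real \<Rightarrow> real^2 \<Rightarrow> real^2 \<Rightarrow> complex^3" where
  "vartheta c w wp = vector [complex_of_real c * (complex_of_real (w$1) + \<i> * complex_of_real (wp$1)),
                             complex_of_real c * (complex_of_real (w$2) + \<i> * complex_of_real (wp$2)),
                             -1]"

text \<open>n is the outward unit normal of the tetrahedron conv{p,a,b,q} on its face conv{p,a,b}:
  a unit vector orthogonal to the face, pointing away from the opposite vertex q.\<close>
definition outward_unit_normal :: "real^3 \<Rightarrow> real^3 \<Rightarrow> real^3 \<Rightarrow> real^3 \<Rightarrow> real^3 \<Rightarrow> bool" where
  "outward_unit_normal n p a b q \<longleftrightarrow>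
     norm n = 1 \<and> n \<bullet> (a - p) = 0 \<and> n \<bullet> (b - p) = 0 \<and> n \<bullet> (q - p) < 0"

definition open_std_triangle :: "(real \<times> real) set" where
  "open_std_triangle = {(a, b). 0 < a \<and> 0 < b \<and> a + b < 1}"

definition triangle_surface_integral ::
  "real^3 \<Rightarrow> real^3 \<Rightarrow> real^3 \<Rightarrow> (real^3 \<Rightarrow> complex) \<Rightarrow> complex" where
  "triangle_surface_integral y1 y2 y3 f =
     integral open_std_triangle
       (\<lambda>(a, b). complex_of_real (norm (cross3 (y2 - y1) (y3 - y1)))
                 * f (y1 + a *\<^sub>R (y2 - y1) + b *\<^sub>R (y3 - y1)))"

definition K_D :: "real \<Rightarrow> real^2 \<Rightarrow> real \<Rightarrow> real^3 \<Rightarrow> real^3 \<Rightarrow> real^3 \<Rightarrow> real^3 \<Rightarrow> complex" where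
  "K_D c wp \<delta> p y1 y2 y3 =
     complex_of_real (2 * \<delta>) *
     triangle_surface_integral y1 y2 y3
       (\<lambda>y. 1 / (complex_of_real (\<delta> * sqrt (c^2 + 1) / c)
                  - \<i> * complex_of_real ((y - p) \<bullet> vector [wp$1, wp$2, 0])) ^ 3)"

end

theory Submission
  imports Defs
begin


lemma derivR:
  fixes z1 z2 z3 w :: complex
  assumes "z1 \<noteq> 0" "z3 \<noteq> 0" "z1 + w*(z2-z1) \<noteq> 0" "z3 + w*(z2-z3) \<noteq> 0"
  shows "((\<lambda>w. w*(z1+z3+w*(z2-z1-z3))/(2*z1*z3*(z1 + w*(z2-z1))*(z3 + w*(z2-z3))))
     has_field_derivative
     (1-w)*(2*(z1 + w*(z2-z1))+(z3-z1)*(1-w))/(2*(z1 + w*(z2-z1))^2*(z3 + w*(z2-z3))^2)) (at w)"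
proof -
  define A where "A = z1 + w*(z2-z1)"
  define B where "B = z3 + w*(z2-z3)"
  have dN: "((\<lambda>w. w*(z1+z3+w*(z2-z1-z3))) has_field_derivative (z1+z3+2*w*(z2-z1-z3))) (at w)"
    by (auto intro!: derivative_eq_intros simp: algebra_simps)
  have dD: "((\<lambda>w. 2*z1*z3*(z1 + w*(z2-z1))*(z3 + w*(z2-z3))) has_field_derivative
       2*z1*z3*((z2-z1)*B + A*(z2-z3))) (at w)"
    unfolding A_def B_def
    by (auto intro!: derivative_eq_intros simp: algebra_simps)
  have D0: "2*z1*z3*(z1 + w*(z2-z1))*(z3 + w*(z2-z3)) \<noteq> 0" using assms by simp
  note d = DERIV_divide[OF dN dD D0]
  have num: "(z1+z3+2*w*(z2-z1-z3)) * (2*z1*z3*A*B) - w*(z1+z3+w*(z2-z1-z3)) * (2*z1*z3*((z2-z1)*B + A*(z2-z3)))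
     = 2*z1*z3*(z1*z3*((1-w)*(2*A+(z3-z1)*(1-w))))"
    unfolding A_def B_def by algebra
  have "((z1+z3+2*w*(z2-z1-z3)) * (2*z1*z3*A*B) - w*(z1+z3+w*(z2-z1-z3)) * (2*z1*z3*((z2-z1)*B + A*(z2-z3))))
     / ((2*z1*z3*A*B) * (2*z1*z3*A*B)) = (1-w)*(2*A+(z3-z1)*(1-w))/(2*A^2*B^2)"
    unfolding num
  proof (subst frac_eq_eq)
    show "2 * z1 * z3 * A * B * (2 * z1 * z3 * A * B) \<noteq> 0" using assms A_def B_def by simp
    show "2 * A\<^sup>2 * B\<^sup>2 \<noteq> 0" using assms A_def B_def by simp
  qed algebra
  then show ?thesis using d unfolding A_def B_def by simp
qed

lemma derivG:
  fixes A g w :: complex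
  assumes "A \<noteq> 0" "A + g * w \<noteq> 0"
  shows "((\<lambda>w. w*(2*A+g*w)/(2*A^2*(A+g*w)^2)) has_field_derivative 1/(A + g*w)^3) (at w)"
proof -
  define B where "B = A + g*w"
  have B: "B \<noteq> 0" using assms B_def by simp
  have "((\<lambda>w. w*(2*A+g*w)/(2*A^2*(A+g*w)^2)) has_field_derivative
     (((1*(2*A+g*w) + w*(g*1)) * (2*A^2*(A+g*w)^2) - w*(2*A+g*w) * (2*A^2*(2*(A+g*w)*(g*1))))
      / (2*A^2*(A+g*w)^2)^2)) (at w)"
    using assms
    by (auto intro!: derivative_eq_intros simp: power2_eq_square)
  moreover have "(((1*(2*A+g*w) + w*(g*1)) * (2*A^2*(A+g*w)^2) - w*(2*A+g*w) * (2*A^2*(2*(A+g*w)*(g*1))))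
      / (2*A^2*(A+g*w)^2)^2) = 1/(A + g*w)^3"
  proof -
    have e: "(1*(2*A+g*w) + w*(g*1)) * (2*A^2*(A+g*w)^2) - w*(2*A+g*w) * (2*A^2*(2*(A+g*w)*(g*1)))
        = 4*A^4*B" unfolding B_def by algebra
    have "(2*A^2*(A+g*w)^2)^2 = 4*A^4*B^4" unfolding B_def by algebra
    with e show ?thesis using assms B by (simp add: B_def[symmetric] field_simps power_eq_if)
  qed
  ultimately show ?thesis by simp
qed

lemma tri_int:
  fixes z1 z2 z3 :: complex and k :: real
  assumes r1: "Re z1 = k" and r2: "Re z2 = k" and r3: "Re z3 = k" and k: "k > 0"
  shows "integral open_std_triangle
     (\<lambda>(s,t). 1/(z1 + of_real s*(z2-z1) + of_real t*(z3-z1))^3) = 1/(2*z1*z2*z3)"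
proof -
  define T where "T = open_std_triangle"
  define f where "f = (\<lambda>x::real\<times>real. 1/(z1 + of_real (fst x)*(z2-z1) + of_real (snd x)*(z3-z1))^3)"
  have fe: "(\<lambda>(s,t). 1/(z1 + of_real s*(z2-z1) + of_real t*(z3-z1))^3) = f"
    unfolding f_def by auto
  have re: "Re (z1 + of_real s*(z2-z1) + of_real t*(z3-z1)) = k" for s t
    using r1 r2 r3 by simp
  have nz: "z1 + of_real s*(z2-z1) + of_real t*(z3-z1) \<noteq> 0" for s t
  proof
    assume h: "z1 + of_real s*(z2-z1) + of_real t*(z3-z1) = 0"
    have "Re (z1 + of_real s*(z2-z1) + of_real t*(z3-z1)) = 0" by (simp only: h zero_complex.sel)
    with re[of s t] k show False by simp
  qed
  have nb: "norm (f x) \<le> 1/k^3" for x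
  proof -
    define d where "d = z1 + of_real (fst x)*(z2-z1) + of_real (snd x)*(z3-z1)"
    have "k \<le> norm d" using re[of "fst x" "snd x"] abs_Re_le_cmod[of d] d_def by simp
    then have "k^3 \<le> norm d ^ 3" using k by (intro power_mono) auto
    then show ?thesis unfolding f_def d_def[symmetric] using k
      by (simp add: norm_divide norm_power divide_simps)
  qed
  have cont: "continuous_on UNIV f"
    unfolding f_def using nz by (intro continuous_intros) auto
  have fm: "f \<in> borel_measurable lborel"
    using borel_measurable_continuous_onI[OF cont] by simp
  have Tm: "T \<in> sets lborel"
  proof -
    have "T = {x. 0 < fst x} \<inter> {x. 0 < snd x} \<inter> {x. fst x + snd x < (1::real)}"
      unfolding T_def open_std_triangle_def by auto
    also have "open \<dots>"
      by (intro open_Int open_Collect_less continuous_intros)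
    finally show ?thesis by simp
  qed
  have Tf: "emeasure lborel T < \<infinity>"
  proof -
    have "T \<subseteq> cbox (0,0) (1,1)" unfolding T_def open_std_triangle_def
      by (auto simp: cbox_Pair_eq)
    then have "emeasure lborel T \<le> emeasure lborel (cbox (0::real,0::real) (1,1))"
      by (intro emeasure_mono) auto
    then show ?thesis using emeasure_lborel_cbox_finite[of "(0::real,0::real)" "(1,1)"]
      by (simp add: order_le_less_trans)
  qed
  have si: "set_integrable lborel T f"
    unfolding set_integrable_def
  proof (rule integrableI_bounded_set[where A=T and B="1/k^3"])
    show "T \<in> sets lborel" by (rule Tm)
    show "(\<lambda>x. indicator T x *\<^sub>R f x) \<in> borel_measurable lborel"
      using fm Tm by measurable
    show "emeasure lborel T < \<infinity>" by (rule Tf)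
    show "AE x in lborel. x \<in> T \<longrightarrow> norm (indicator T x *\<^sub>R f x) \<le> 1 / k ^ 3"
      using nb by (auto simp: indicator_def)
    show "AE x in lborel. x \<notin> T \<longrightarrow> indicator T x *\<^sub>R f x = 0"
      by (auto simp: indicator_def)
  qed
  define A where "A = (\<lambda>s::real. z1 + of_real s*(z2-z1))"
  define g where "g = z3 - z1"
  define H where "H = (\<lambda>w::complex. (1-w)*(2*(z1 + w*(z2-z1))+(z3-z1)*(1-w))/(2*(z1 + w*(z2-z1))^2*(z3 + w*(z2-z3))^2))"
  have inner: "(\<integral>t. indicator T (s,t) *\<^sub>R f (s,t) \<partial>lborel) = indicator {0<..<1} s *\<^sub>R H (of_real s)" for s
  proof (cases "0 < s \<and> s < 1")
    case True
    have ind: "indicator T (s,t) = (indicator {0<..<1-s} t :: real)" for t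
      using True unfolding T_def open_std_triangle_def by (auto simp: indicator_def)
    have "(\<integral>t. indicator T (s,t) *\<^sub>R f (s,t) \<partial>lborel) = (LINT t:{0<..<1-s}|lborel. f (s,t))"
      unfolding set_lebesgue_integral_def ind ..
    also have "\<dots> = (LBINT t=ereal 0..ereal (1-s). f (s,t))"
      using True by (subst interval_lebesgue_integral_le_eq) auto
    also have "\<dots> = (\<lambda>w. w*(2*A s+g*w)/(2*(A s)^2*(A s+g*w)^2)) (of_real (1-s))
         - (\<lambda>w. w*(2*A s+g*w)/(2*(A s)^2*(A s+g*w)^2)) (of_real 0)"
    proof (rule interval_integral_FTC_finite)
      show "continuous_on {min 0 (1 - s)..max 0 (1 - s)} (\<lambda>t. f (s, t))"
        by (rule continuous_on_subset[OF continuous_on_compose2[OF cont, of UNIV "\<lambda>t. (s,t)"]])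
           (auto intro!: continuous_intros)
      fix t assume "min 0 (1 - s) \<le> t" "t \<le> max 0 (1 - s)"
      have e: "A s + g * of_real t = z1 + of_real s*(z2-z1) + of_real t*(z3-z1)"
        unfolding A_def g_def by (simp add: algebra_simps)
      have "A s \<noteq> 0" using nz[of s 0] unfolding A_def by simp
      moreover have "A s + g * of_real t \<noteq> 0" using nz[of s t] e by simp
      ultimately have "((\<lambda>w. w*(2*A s+g*w)/(2*(A s)^2*(A s+g*w)^2)) has_field_derivative 1/(A s + g* of_real t)^3) (at (of_real t))"
        by (rule derivG)
      from has_vector_derivative_real_field[OF this, of "{min 0 (1 - s)..max 0 (1 - s)}"]
      show "((\<lambda>t. (\<lambda>w. w*(2*A s+g*w)/(2*(A s)^2*(A s+g*w)^2)) (of_real t)) has_vector_derivative f (s, t))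
          (at t within {min 0 (1 - s)..max 0 (1 - s)})"
        unfolding f_def using e by simp
    qed
    also have "\<dots> = H (of_real s)"
    proof -
      have e2: "A s + g * of_real (1-s) = z3 + of_real s*(z2-z3)"
        unfolding A_def g_def by (simp add: algebra_simps)
      show ?thesis unfolding e2 unfolding H_def A_def g_def by (simp add: algebra_simps)
    qed
    finally show ?thesis using True by simp
  next
    case False
    have "indicator T (s,t) = (0::real)" for t
      using False unfolding T_def open_std_triangle_def by (auto simp: indicator_def)
    then show ?thesis using False by simp
  qed
  define R where "R = (\<lambda>w::complex. w*(z1+z3+w*(z2-z1-z3))/(2*z1*z3*(z1 + w*(z2-z1))*(z3 + w*(z2-z3))))"
  have nz1: "z1 \<noteq> 0" using nz[of 0 0] by simp
  have nz2: "z2 \<noteq> 0" using nz[of 1 0] by simp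
  have nz3: "z3 \<noteq> 0" using nz[of 0 1] by simp
  have si2: "integrable (lborel \<Otimes>\<^sub>M lborel) (\<lambda>x. indicator T x *\<^sub>R f x)"
    using si unfolding set_integrable_def lborel_prod .
  have "integral T f = set_lebesgue_integral lborel T f"
    using set_borel_integral_eq_integral(2)[OF si] by simp
  also have "\<dots> = integral\<^sup>L (lborel \<Otimes>\<^sub>M lborel) (\<lambda>x. indicator T x *\<^sub>R f x)"
    by (simp add: set_lebesgue_integral_def lborel_prod)
  also have "\<dots> = (\<integral>s. (\<integral>t. indicator T (s,t) *\<^sub>R f (s,t) \<partial>lborel) \<partial>lborel)"
    using lborel_pair.integral_fst'[OF si2] by simp
  also have "\<dots> = (\<integral>s. indicator {0<..<1} s *\<^sub>R H (of_real s) \<partial>lborel)"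
    using inner by simp
  also have "\<dots> = (LBINT s=ereal 0..ereal 1. H (of_real s))"
    by (subst interval_lebesgue_integral_le_eq) (auto simp: set_lebesgue_integral_def)
  also have "\<dots> = R (of_real 1) - R (of_real 0)"
  proof (rule interval_integral_FTC_finite)
    have dnz: "2*(z1 + of_real s * (z2-z1))^2*(z3 + of_real s * (z2-z3))^2 \<noteq> 0" for s
    proof -
      have "z1 + of_real s * (z2-z1) \<noteq> 0" using nz[of s 0] by simp
      moreover have "z3 + of_real s * (z2-z3) \<noteq> 0" using nz[of s "1-s"] by (simp add: algebra_simps)
      ultimately show ?thesis by simp
    qed
    have "continuous_on {0..1} (\<lambda>s. H (of_real s))"
      unfolding H_def using dnz by (intro continuous_intros) auto
    then show "continuous_on {min 0 1..max 0 1} (\<lambda>s. H (of_real s))" by simp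
    fix s :: real assume "min 0 1 \<le> s" "s \<le> max 0 1"
    have a: "z1 + of_real s * (z2-z1) \<noteq> 0" using nz[of s 0] by simp
    have b: "z3 + of_real s * (z2-z3) \<noteq> 0" using nz[of s "1-s"] by (simp add: algebra_simps)
    have "(R has_field_derivative H (of_real s)) (at (of_real s))"
      unfolding R_def H_def by (rule derivR[OF nz1 nz3 a b])
    from has_vector_derivative_real_field[OF this, of "{min 0 1..max 0 1}"]
    show "((\<lambda>s. R (of_real s)) has_vector_derivative H (of_real s)) (at s within {min 0 1..max 0 1})" .
  qed
  also have "\<dots> = 1/(2*z1*z2*z3)"
  proof -
    have "z1+z3+(z2-z1-z3) = z2" "z1 + (z2-z1) = z2" "z3 + (z2-z3) = z2" by simp_all
    then show ?thesis unfolding R_def using nz1 nz2 nz3 by simp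
  qed
  finally show ?thesis unfolding fe T_def .
qed



lemma dual3: "(a1 \<bullet> cross3 a2 a3) *\<^sub>R v = (v \<bullet> a3) *\<^sub>R cross3 a1 a2 + (v \<bullet> a1) *\<^sub>R cross3 a2 a3 + (v \<bullet> a2) *\<^sub>R cross3 a3 a1"
  by (simp add: cross3_simps forall_3)

lemma cyc3: "a2 \<bullet> cross3 a3 a1 = a1 \<bullet> cross3 a2 a3" "a3 \<bullet> cross3 a1 a2 = a1 \<bullet> cross3 a2 a3"
  by (simp_all add: cross3_simps)

lemma crosscross: "cross3 (cross3 a b) (cross3 c a) = (-(a \<bullet> cross3 b c)) *\<^sub>R a"
  by (simp add: cross3_simps forall_3)

lemma bdot_scale: "bdot (cvec (r *\<^sub>R v)) th = of_real r * bdot (cvec v) th"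
  by (simp add: bdot_def cvec_def sum_3 algebra_simps)

lemma cvec_scale: "cvec (r *\<^sub>R v) = of_real r *s cvec v"
  by (simp add: cvec_def vec_eq_iff)

lemma dual3c: "of_real (a1 \<bullet> cross3 a2 a3) *s th = bdot (cvec a3) th *s cvec (cross3 a1 a2)
   + bdot (cvec a1) th *s cvec (cross3 a2 a3) + bdot (cvec a2) th *s cvec (cross3 a3 a1)"
  by (simp add: vec_eq_iff forall_3 bdot_def cvec_def sum_3 cross3_def inner_vec_def algebra_simps)

lemma triple: "cross3 a (cross3 b c) = (a \<bullet> c) *\<^sub>R b - (a \<bullet> b) *\<^sub>R c"
  by (simp add: cross3_simps forall_3)

lemma normal_rep:
  assumes "a1 \<bullet> cross3 a2 a3 \<noteq> 0" "n \<bullet> a1 = 0" "n \<bullet> a2 = 0"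
  shows "n = ((n \<bullet> a3)/(a1 \<bullet> cross3 a2 a3)) *\<^sub>R cross3 a1 a2"
proof -
  have "(a1 \<bullet> cross3 a2 a3) *\<^sub>R n = (n \<bullet> a3) *\<^sub>R cross3 a1 a2"
    using dual3[of a1 a2 a3 n] assms(2,3) by simp
  then show ?thesis using assms(1)
    by (metis (no_types, lifting) divide_inverse_commute inverse_eq_divide scaleR_scaleR
        scaleR_one right_inverse)
qed

lemma unit_sgn:
  fixes m :: "real^3"
  assumes "n = \<kappa> *\<^sub>R m" "norm n = 1"
  shows "norm m *\<^sub>R n = sgn \<kappa> *\<^sub>R m"
proof -
  have "\<bar>\<kappa>\<bar> * norm m = 1" using assms by simp
  then have "norm m * \<kappa> = sgn \<kappa>"
    by (metis mult.commute mult.left_commute mult_1 sgn_mult_abs)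
  then show ?thesis using assms(1) by simp
qed

lemma term_simp:
  fixes a b :: "real^3"
  assumes "e = (-\<alpha>) *\<^sub>R a" "f = (-\<beta>) *\<^sub>R b" "\<alpha>*\<beta> > 0" "\<nu> = \<kappa> *\<^sub>R cross3 a b" "norm \<nu> = 1"
  shows "(complex_of_real (norm (cross3 e f)) / (bdot (cvec e) th * bdot (cvec f) th)) *s cvec \<nu>
     = (complex_of_real (sgn \<kappa>) / (bdot (cvec a) th * bdot (cvec b) th)) *s cvec (cross3 a b)"
proof -
  have cf: "cross3 e f = (\<alpha>*\<beta>) *\<^sub>R cross3 a b"
    using assms(1,2) by (simp add: cross_mult_left cross_mult_right)
  have nf: "norm (cross3 e f) = (\<alpha>*\<beta>) * norm (cross3 a b)"
    using cf assms(3) by simp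
  have bd: "bdot (cvec e) th * bdot (cvec f) th = of_real (\<alpha>*\<beta>) * (bdot (cvec a) th * bdot (cvec b) th)"
    unfolding assms(1,2) bdot_scale by (simp add: algebra_simps)
  have "complex_of_real (norm (cross3 e f)) / (bdot (cvec e) th * bdot (cvec f) th)
      = complex_of_real (norm (cross3 a b)) / (bdot (cvec a) th * bdot (cvec b) th)"
  proof -
    have "\<alpha> \<noteq> 0" "\<beta> \<noteq> 0" using assms(3) by auto
    then show ?thesis unfolding nf bd by (simp add: divide_simps)
  qed
  moreover have "complex_of_real (norm (cross3 a b)) *s cvec \<nu> = complex_of_real (sgn \<kappa>) *s cvec (cross3 a b)"
    using unit_sgn[OF assms(4,5)] by (metis cvec_scale)
  ultimately show ?thesis
    by (metis (no_types, lifting) divide_inverse_commute vector_smult_assoc)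
qed

lemma final_alg:
  fixes X m1 m2 m3 :: "complex^3"
  assumes "l1\<noteq>0" "l2\<noteq>0" "l3\<noteq>0" "X = l3 *s m1 + l1 *s m2 + l2 *s m3"
  shows "(C * sg/(l1*l2*l3)) *s X = C *s ((sg/(l1*l2)) *s m1 + (sg/(l2*l3)) *s m2 + (sg/(l3*l1)) *s m3)"
  using assms by (simp add: vec_eq_iff field_simps)

lemma ell_z:
  fixes c \<delta> :: real and \<omega> \<omega>p :: "real^2" and v :: "real^3"
  assumes "c > 0" "v \<bullet> omega_c c \<omega> = -\<delta>"
  shows "bdot (cvec v) (vartheta c \<omega> \<omega>p) = - of_real c * (of_real (\<delta> * sqrt(c^2+1)/c) - \<i> * of_real (v \<bullet> vector[\<omega>p$1, \<omega>p$2, 0]))"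
proof -
  define s where "s = sqrt (c^2+1)"
  have s: "s > 0" unfolding s_def by (smt (verit) real_sqrt_gt_zero zero_le_power2)
  have "v \<bullet> omega_c c \<omega> = (1/s) * (v$1 * (c*\<omega>$1) + v$2*(c*\<omega>$2) - v$3)"
    unfolding omega_c_def s_def inner_scaleR_right by (simp add: inner_vec_def sum_3 algebra_simps)
  then have h: "v$1 * (c*\<omega>$1) + v$2*(c*\<omega>$2) - v$3 = - \<delta> * s" using assms(2) s by (simp add: field_simps)
  show ?thesis
    using h assms(1) unfolding s_def[symmetric]
    by (simp add: complex_eq_iff bdot_def cvec_def vartheta_def sum_3 inner_vec_def algebra_simps)
qed

lemma trans_sum:
  fixes p y1 y2 y3 :: "real^3"
  shows "(\<lambda>x. -p + x) ` {y1, y2, y3} = {y1 - p, y2 - p, y3 - p}"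
proof -
  have "-p + y = y - p" for y :: "real^3" by simp
  then show ?thesis by simp
qed

lemma N_lemma:
  fixes u a1 a2 a3 :: "real^3"
  assumes "norm u = 1" "a1 \<bullet> u = -\<delta>" "a2 \<bullet> u = -\<delta>" "a3 \<bullet> u = -\<delta>" "\<delta> > 0"
  shows "\<delta> * norm (cross3 (a2 - a1) (a3 - a1)) = \<bar>a1 \<bullet> cross3 a2 a3\<bar>"
proof -
  define N where "N = cross3 (a2 - a1) (a3 - a1)"
  have uu: "u \<bullet> u = 1" using assms(1) by (simp add: norm_eq_1)
  have uN: "cross3 u N = 0"
    unfolding N_def triple using assms(2-4) by (simp add: inner_diff_right inner_commute)
  have "cross3 u (cross3 u N) = (u \<bullet> N) *\<^sub>R u - N" using triple[of u u N] uu by simp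
  then have NN: "N = (u \<bullet> N) *\<^sub>R u" using uN by simp
  have D: "a1 \<bullet> cross3 a2 a3 = N \<bullet> a1"
    unfolding N_def by (simp add: cross3_simps)
  also have "\<dots> = (u \<bullet> N) * (u \<bullet> a1)" by (subst NN) simp
  also have "\<dots> = - \<delta> * (u \<bullet> N)" using assms(2) by (simp add: inner_commute)
  finally have "\<bar>a1 \<bullet> cross3 a2 a3\<bar> = \<delta> * \<bar>u \<bullet> N\<bar>" using assms(5) by (simp add: abs_mult)
  moreover have "norm N = \<bar>u \<bullet> N\<bar>" using NN assms(1) by (metis norm_scaleR mult_1_right)
  ultimately show ?thesis unfolding N_def by simp
qed

lemma D_nonzero:
  fixes a1 a2 a3 \<nu>1 \<nu>2 :: "real^3"
  assumes indep: "\<not> dependent {a1, a2, a3}" and dist: "a1 \<noteq> a2" "a1 \<noteq> a3" "a2 \<noteq> a3"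
    and n1: "\<nu>1 \<bullet> a1 = 0" "\<nu>1 \<bullet> a2 = 0" "\<nu>1 \<bullet> a3 < 0"
  shows "a1 \<bullet> cross3 a2 a3 \<noteq> 0"
proof
  assume D: "a1 \<bullet> cross3 a2 a3 = 0"
  have "(\<nu>1 \<bullet> a3) *\<^sub>R cross3 a1 a2 = 0"
    using dual3[of a1 a2 a3 \<nu>1] D n1 by (simp add: inner_commute)
  then have c: "cross3 a1 a2 = 0" using n1(3) by simp
  show False
  proof (cases "a2 = 0")
    case True
    then show False using indep dependent_zero[of "{a1,a2,a3}"] by simp
  next
    case False
    have "cross3 a2 (cross3 a1 a2) = (a2 \<bullet> a2) *\<^sub>R a1 - (a2 \<bullet> a1) *\<^sub>R a2" by (rule triple)
    then have "(a2 \<bullet> a2) *\<^sub>R a1 = (a2 \<bullet> a1) *\<^sub>R a2" using c by simp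
    moreover have "a2 \<bullet> a2 \<noteq> 0" using False by simp
    ultimately have "a1 = ((a2 \<bullet> a1)/(a2 \<bullet> a2)) *\<^sub>R a2"
      by (metis (no_types, lifting) divide_inverse_commute inverse_eq_divide scaleR_scaleR
          scaleR_one left_inverse mult.commute)
    then have "a1 \<in> span ({a1,a2,a3} - {a1})"
      using dist by (metis insert_iff insert_Diff_if span_base span_scale singletonD)
    then have "dependent {a1,a2,a3}" unfolding dependent_def by blast
    then show False using indep by simp
  qed
qed



lemma norm_omega_c:
  assumes "norm \<omega> = 1"
  shows "norm (omega_c c \<omega>) = 1"
proof -
  have "\<omega> \<bullet> \<omega> = 1" using assms by (simp add: norm_eq_1)
  then have w: "\<omega>$1 * \<omega>$1 + \<omega>$2 * \<omega>$2 = 1" by (simp add: inner_vec_def sum_2)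
  define s where "s = sqrt (c^2+1)"
  have s: "s > 0" unfolding s_def by (smt (verit) real_sqrt_gt_zero zero_le_power2)
  have s2: "s * s = c^2 + 1" unfolding s_def by (smt (verit) real_sqrt_mult_self zero_le_power2)
  have cc: "1 + c*c \<noteq> 0" by (smt (verit) zero_le_square)
  have "omega_c c \<omega> \<bullet> omega_c c \<omega> = (1/s) * (1/s) * (c*c*(\<omega>$1 * \<omega>$1 + \<omega>$2 * \<omega>$2) + 1)"
    unfolding omega_c_def s_def[symmetric] by (simp add: inner_vec_def sum_3 algebra_simps)
  also have "\<dots> = 1" using w s s2 cc by (simp add: field_simps power2_eq_square)
  finally show ?thesis by (simp add: norm_eq_1)
qed

lemma test_card:
  fixes p y1 y2 y3 :: "real^3"
  assumes "card {p, y1, y2, y3} = 4"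
  shows "p \<notin> {y1,y2,y3}" "y1 \<noteq> y2" "y1 \<noteq> y3" "y2 \<noteq> y3"
  using assms by (auto simp: card_insert_if split: if_splits)

theorem proposition4p2:
  fixes c \<delta> :: real and \<omega> \<omega>p :: "real^2" and p y1 y2 y3 \<nu>1 \<nu>2 \<nu>3 :: "real^3"
  assumes "c > 0"
    and "norm \<omega> = 1" and "norm \<omega>p = 1" and "\<omega> \<bullet> \<omega>p = 0"
    and "\<delta> > 0"
    and "y1 \<bullet> omega_c c \<omega> = p \<bullet> omega_c c \<omega> - \<delta>"
    and "y2 \<bullet> omega_c c \<omega> = p \<bullet> omega_c c \<omega> - \<delta>"
    and "y3 \<bullet> omega_c c \<omega> = p \<bullet> omega_c c \<omega> - \<delta>"
    and "card {p, y1, y2, y3} = 4" and "\<not> affine_dependent {p, y1, y2, y3}"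
    and "outward_unit_normal \<nu>1 p y1 y2 y3"
    and "outward_unit_normal \<nu>2 p y2 y3 y1"
    and "outward_unit_normal \<nu>3 p y3 y1 y2"
    and "cross3 \<nu>1 \<nu>3 \<bullet> omega_c c \<omega> < 0"
    and "cross3 \<nu>2 \<nu>1 \<bullet> omega_c c \<omega> < 0"
    and "cross3 \<nu>3 \<nu>2 \<bullet> omega_c c \<omega> < 0"
  shows "K_D c \<omega>p \<delta> p y1 y2 y3 *s vartheta c \<omega> \<omega>p =
    complex_of_real (c^3) *s
      ( (complex_of_real (norm (cross3 (cross3 \<nu>1 \<nu>3) (cross3 \<nu>2 \<nu>1)))
          / (bdot (cvec (cross3 \<nu>1 \<nu>3)) (vartheta c \<omega> \<omega>p)
             * bdot (cvec (cross3 \<nu>2 \<nu>1)) (vartheta c \<omega> \<omega>p))) *s cvec \<nu>1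
      + (complex_of_real (norm (cross3 (cross3 \<nu>2 \<nu>1) (cross3 \<nu>3 \<nu>2)))
          / (bdot (cvec (cross3 \<nu>2 \<nu>1)) (vartheta c \<omega> \<omega>p)
             * bdot (cvec (cross3 \<nu>3 \<nu>2)) (vartheta c \<omega> \<omega>p))) *s cvec \<nu>2
      + (complex_of_real (norm (cross3 (cross3 \<nu>3 \<nu>2) (cross3 \<nu>1 \<nu>3)))
          / (bdot (cvec (cross3 \<nu>3 \<nu>2)) (vartheta c \<omega> \<omega>p)
             * bdot (cvec (cross3 \<nu>1 \<nu>3)) (vartheta c \<omega> \<omega>p))) *s cvec \<nu>3 )"
proof -
  define a1 where "a1 = y1 - p"
  define a2 where "a2 = y2 - p"
  define a3 where "a3 = y3 - p"
  define u where "u = omega_c c \<omega>"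
  define th where "th = vartheta c \<omega> \<omega>p"
  define w3 :: "real^3" where "w3 = vector [\<omega>p$1, \<omega>p$2, 0]"
  define D where "D = a1 \<bullet> cross3 a2 a3"
  define k where "k = \<delta> * sqrt (c^2+1) / c"
  define z where "z = (\<lambda>v. complex_of_real k - \<i> * complex_of_real (v \<bullet> w3))"
  define l where "l = (\<lambda>v. bdot (cvec v) th)"
  have ha: "a1 \<bullet> u = -\<delta>" "a2 \<bullet> u = -\<delta>" "a3 \<bullet> u = -\<delta>"
    using assms(6-8) unfolding a1_def a2_def a3_def u_def by (simp_all add: inner_diff_left)
  have lz: "l v = - of_real c * z v" if "v \<bullet> u = -\<delta>" for v
    using ell_z[OF assms(1) that[unfolded u_def], of \<omega>p] unfolding l_def z_def th_def w3_def k_def .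
  have k: "k > 0" using assms(1,5) unfolding k_def
    by (smt (verit) divide_pos_pos mult_pos_pos real_sqrt_gt_zero zero_le_power2)
  have zre: "Re (z v) = k" for v unfolding z_def by simp
  have znz: "z v \<noteq> 0" for v using zre[of v] k by (metis zero_complex.sel(1) less_irrefl)
  have lnz: "l a1 \<noteq> 0" "l a2 \<noteq> 0" "l a3 \<noteq> 0"
    using lz[OF ha(1)] lz[OF ha(2)] lz[OF ha(3)] znz assms(1) by auto
  have nu: "norm u = 1" unfolding u_def by (rule norm_omega_c[OF assms(2)])
  note dist = test_card[OF assms(9)]
  have adist: "a1 \<noteq> a2" "a1 \<noteq> a3" "a2 \<noteq> a3" using dist unfolding a1_def a2_def a3_def by auto
  have indep: "\<not> dependent {a1, a2, a3}"
    using assms(10) affine_dependent_iff_dependent[OF dist(1)] trans_sum[of p y1 y2 y3]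
    unfolding a1_def a2_def a3_def by simp
  have o1: "\<nu>1 \<bullet> a1 = 0" "\<nu>1 \<bullet> a2 = 0" "\<nu>1 \<bullet> a3 < 0" "norm \<nu>1 = 1"
    using assms(11) unfolding outward_unit_normal_def a1_def a2_def a3_def by auto
  have o2: "\<nu>2 \<bullet> a2 = 0" "\<nu>2 \<bullet> a3 = 0" "\<nu>2 \<bullet> a1 < 0" "norm \<nu>2 = 1"
    using assms(12) unfolding outward_unit_normal_def a1_def a2_def a3_def by auto
  have o3: "\<nu>3 \<bullet> a3 = 0" "\<nu>3 \<bullet> a1 = 0" "\<nu>3 \<bullet> a2 < 0" "norm \<nu>3 = 1"
    using assms(13) unfolding outward_unit_normal_def a1_def a2_def a3_def by auto
  have D0: "D \<noteq> 0" unfolding D_def using D_nonzero[OF indep adist o1(1-3)] .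
  have cyc: "a2 \<bullet> cross3 a3 a1 = D" "a3 \<bullet> cross3 a1 a2 = D" unfolding D_def by (simp_all add: cyc3)
  define \<kappa>1 where "\<kappa>1 = (\<nu>1 \<bullet> a3) / D"
  define \<kappa>2 where "\<kappa>2 = (\<nu>2 \<bullet> a1) / D"
  define \<kappa>3 where "\<kappa>3 = (\<nu>3 \<bullet> a2) / D"
  have nu1: "\<nu>1 = \<kappa>1 *\<^sub>R cross3 a1 a2"
    using normal_rep[of a1 a2 a3 \<nu>1] D0 o1 unfolding \<kappa>1_def D_def by simp
  have nu2: "\<nu>2 = \<kappa>2 *\<^sub>R cross3 a2 a3"
    using normal_rep[of a2 a3 a1 \<nu>2] D0 o2 cyc unfolding \<kappa>2_def by simp
  have nu3: "\<nu>3 = \<kappa>3 *\<^sub>R cross3 a3 a1"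
    using normal_rep[of a3 a1 a2 \<nu>3] D0 o3 cyc unfolding \<kappa>3_def by simp
  have kD: "\<kappa>1 * D < 0" "\<kappa>2 * D < 0" "\<kappa>3 * D < 0"
    unfolding \<kappa>1_def \<kappa>2_def \<kappa>3_def using D0 o1 o2 o3 by simp_all
  define \<sigma> where "\<sigma> = - sgn D"
  have sg: "sgn \<kappa>1 = \<sigma>" "sgn \<kappa>2 = \<sigma>" "sgn \<kappa>3 = \<sigma>"
    unfolding \<sigma>_def using kD D0 by (auto simp: mult_less_0_iff sgn_if)
  have pos: "\<kappa>1 * \<kappa>2 > 0" "\<kappa>2 * \<kappa>3 > 0" "\<kappa>1 * \<kappa>3 > 0"
    using kD by (auto simp: mult_less_0_iff zero_less_mult_iff)
  have e1: "cross3 \<nu>1 \<nu>3 = (-(\<kappa>1*\<kappa>3*D)) *\<^sub>R a1"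
    unfolding nu1 nu3 cross_mult_left cross_mult_right crosscross D_def by simp
  have e2: "cross3 \<nu>2 \<nu>1 = (-(\<kappa>1*\<kappa>2*D)) *\<^sub>R a2"
    unfolding nu1 nu2 cross_mult_left cross_mult_right crosscross using cyc by simp
  have e3: "cross3 \<nu>3 \<nu>2 = (-(\<kappa>2*\<kappa>3*D)) *\<^sub>R a3"
    unfolding nu3 nu2 cross_mult_left cross_mult_right crosscross using cyc by simp
  have p1: "(\<kappa>1*\<kappa>3*D) * (\<kappa>1*\<kappa>2*D) > 0"
  proof -
    have "(\<kappa>1*\<kappa>3*D) * (\<kappa>1*\<kappa>2*D) = (\<kappa>2*\<kappa>3) * ((\<kappa>1*D)*(\<kappa>1*D))" by (simp add: algebra_simps)
    moreover have "(\<kappa>1*D)*(\<kappa>1*D) > 0" using kD(1) by (simp add: mult_neg_neg)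
    ultimately show ?thesis using pos(2) by (metis mult_pos_pos)
  qed
  have p2: "(\<kappa>1*\<kappa>2*D) * (\<kappa>2*\<kappa>3*D) > 0"
  proof -
    have "(\<kappa>1*\<kappa>2*D) * (\<kappa>2*\<kappa>3*D) = (\<kappa>1*\<kappa>3) * ((\<kappa>2*D)*(\<kappa>2*D))" by (simp add: algebra_simps)
    moreover have "(\<kappa>2*D)*(\<kappa>2*D) > 0" using kD(2) by (simp add: mult_neg_neg)
    ultimately show ?thesis using pos(3) by (metis mult_pos_pos)
  qed
  have p3: "(\<kappa>2*\<kappa>3*D) * (\<kappa>1*\<kappa>3*D) > 0"
  proof -
    have "(\<kappa>2*\<kappa>3*D) * (\<kappa>1*\<kappa>3*D) = (\<kappa>1*\<kappa>2) * ((\<kappa>3*D)*(\<kappa>3*D))" by (simp add: algebra_simps)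
    moreover have "(\<kappa>3*D)*(\<kappa>3*D) > 0" using kD(3) by (simp add: mult_neg_neg)
    ultimately show ?thesis using pos(1) by (metis mult_pos_pos)
  qed
  have t1: "(complex_of_real (norm (cross3 (cross3 \<nu>1 \<nu>3) (cross3 \<nu>2 \<nu>1)))
          / (bdot (cvec (cross3 \<nu>1 \<nu>3)) th * bdot (cvec (cross3 \<nu>2 \<nu>1)) th)) *s cvec \<nu>1
     = (complex_of_real \<sigma> / (l a1 * l a2)) *s cvec (cross3 a1 a2)"
    using term_simp[OF e1 e2 p1 nu1 o1(4), of th] sg unfolding l_def by simp
  have t2: "(complex_of_real (norm (cross3 (cross3 \<nu>2 \<nu>1) (cross3 \<nu>3 \<nu>2)))
          / (bdot (cvec (cross3 \<nu>2 \<nu>1)) th * bdot (cvec (cross3 \<nu>3 \<nu>2)) th)) *s cvec \<nu>2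
     = (complex_of_real \<sigma> / (l a2 * l a3)) *s cvec (cross3 a2 a3)"
    using term_simp[OF e2 e3 p2 nu2 o2(4), of th] sg unfolding l_def by simp
  have t3: "(complex_of_real (norm (cross3 (cross3 \<nu>3 \<nu>2) (cross3 \<nu>1 \<nu>3)))
          / (bdot (cvec (cross3 \<nu>3 \<nu>2)) th * bdot (cvec (cross3 \<nu>1 \<nu>3)) th)) *s cvec \<nu>3
     = (complex_of_real \<sigma> / (l a3 * l a1)) *s cvec (cross3 a3 a1)"
    using term_simp[OF e3 e1 p3 nu3 o3(4), of th] sg unfolding l_def by simp
  have KD: "K_D c \<omega>p \<delta> p y1 y2 y3 = complex_of_real (c^3) * complex_of_real \<sigma> * complex_of_real D / (l a1 * l a2 * l a3)"
  proof -
    define N where "N = cross3 (y2 - y1) (y3 - y1)"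
    have Na: "N = cross3 (a2 - a1) (a3 - a1)" unfolding N_def a1_def a2_def a3_def by simp
    have zlin: "z (y1 + a *\<^sub>R (y2 - y1) + b *\<^sub>R (y3 - y1) - p)
        = z a1 + of_real a * (z a2 - z a1) + of_real b * (z a3 - z a1)" for a b
      unfolding z_def a1_def a2_def a3_def
      by (simp add: inner_add_left inner_diff_left inner_scaleR_left algebra_simps)
    have fe: "(\<lambda>(a, b). complex_of_real (norm N) * (1 / (z (y1 + a *\<^sub>R (y2 - y1) + b *\<^sub>R (y3 - y1) - p)) ^ 3))
      = (\<lambda>x. complex_of_real (norm N) * (\<lambda>(a,b). 1/(z a1 + of_real a * (z a2 - z a1) + of_real b * (z a3 - z a1))^3) x)"
      by (auto simp: fun_eq_iff zlin)
    have "K_D c \<omega>p \<delta> p y1 y2 y3 = complex_of_real (2 * \<delta>) *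
       integral open_std_triangle (\<lambda>(a, b). complex_of_real (norm N) * (1 / (z (y1 + a *\<^sub>R (y2 - y1) + b *\<^sub>R (y3 - y1) - p)) ^ 3))"
      unfolding K_D_def triangle_surface_integral_def N_def z_def k_def w3_def by simp
    also have "\<dots> = complex_of_real (2 * \<delta>) * (complex_of_real (norm N) * (1/(2 * z a1 * z a2 * z a3)))"
      unfolding fe integral_mult_right tri_int[OF zre zre zre k] ..
    finally have K1: "K_D c \<omega>p \<delta> p y1 y2 y3 = complex_of_real (2 * \<delta>) * (complex_of_real (norm N) * (1/(2 * z a1 * z a2 * z a3)))" .
    have dn: "\<delta> * norm N = - \<sigma> * D"
      using N_lemma[OF nu ha assms(5)] unfolding Na D_def[symmetric] \<sigma>_def
      by (simp add: abs_sgn mult.commute)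
    have dn': "complex_of_real (2 * \<delta>) * complex_of_real (norm N) = 2 * (- complex_of_real \<sigma> * complex_of_real D)"
      using arg_cong[OF dn, of complex_of_real] by simp
    have c0: "complex_of_real c \<noteq> 0" using assms(1) by simp
    show ?thesis
      unfolding K1 lz[OF ha(1)] lz[OF ha(2)] lz[OF ha(3)]
      using znz[of a1] znz[of a2] znz[of a3] c0 dn'
      by (simp add: field_simps power3_eq_cube)
  qed
  have dual: "complex_of_real D *s th = l a3 *s cvec (cross3 a1 a2) + l a1 *s cvec (cross3 a2 a3) + l a2 *s cvec (cross3 a3 a1)"
    unfolding D_def l_def by (rule dual3c)
  have "K_D c \<omega>p \<delta> p y1 y2 y3 *s th = (complex_of_real (c^3) * complex_of_real \<sigma> / (l a1 * l a2 * l a3)) *s (complex_of_real D *s th)"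
    unfolding KD by (simp add: vector_smult_assoc algebra_simps)
  also have "\<dots> = complex_of_real (c^3) *s ((complex_of_real \<sigma> / (l a1 * l a2)) *s cvec (cross3 a1 a2)
      + (complex_of_real \<sigma> / (l a2 * l a3)) *s cvec (cross3 a2 a3) + (complex_of_real \<sigma> / (l a3 * l a1)) *s cvec (cross3 a3 a1))"
    by (rule final_alg[OF lnz dual])
  finally show ?thesis unfolding th_def[symmetric] t1 t2 t3 .
qed

end
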